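(* Let $p,n\in\mathbb N$ with $p\ge n\ge 10$, and write $p=k(n-1)+r$ with $k\in\mathbb N$ and $r\in\{0,1,2,n-5,n-4,n-3,n-2\}$. Then $$\mathrm{ex}(p;T_n^3)=\frac{(n-2)p-r(n-1-r)}2.$$
   Context: All graphs are finite simple graphs. For a graph $L$, $\mathrm{ex}(p;L)$ denotes the maximum number of edges in a graph on $p$ vertices that contains no subgraph isomorphic to $L$. For $n\ge 6$, $T_n^3$ is the tree on vertex set $\{v_0,\ldots,v_{n-1}\}$ with edge set $\{v_0v_1,v_0v_2,\ldots,v_0v_{n-4},\ v_1v_{n-3},\ v_1v_{n-2},\ v_1v_{n-1}\}$. $\mathbb N=\{1,2,\ldots\}$. *)

theory Defs
  imports Main
begin

definition simple_graph :: "'a set \<Rightarrow> 'a set set \<Rightarrow> bool" where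
  "simple_graph V E \<longleftrightarrow> finite V \<and> (\<forall>e\<in>E. \<exists>u v. e = {u, v} \<and> u \<noteq> v \<and> u \<in> V \<and> v \<in> V)"

definition contains_subgraph :: "'a set \<Rightarrow> 'a set set \<Rightarrow> 'b set \<Rightarrow> 'b set set \<Rightarrow> bool" where
  "contains_subgraph V E VL EL \<longleftrightarrow>
     (\<exists>f. inj_on f VL \<and> f ` VL \<subseteq> V \<and> (\<forall>e\<in>EL. f ` e \<in> E))"

definition ex :: "nat \<Rightarrow> 'b set \<Rightarrow> 'b set set \<Rightarrow> nat" where
  "ex p VL EL = Max {card E | E. simple_graph {0..<p} E \<and> \<not> contains_subgraph {0..<p} E VL EL}"

definition T3_vertices :: "nat \<Rightarrow> nat set" where
  "T3_vertices n = {0..<n}"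

definition T3_edges :: "nat \<Rightarrow> nat set set" where
  "T3_edges n = {{0, i} | i. 1 \<le> i \<and> i \<le> n - 4} \<union> {{1, j} | j. n - 3 \<le> j \<and> j \<le> n - 1}"

end

theory Submission
  imports Defs
begin


definition fri :: "int \<Rightarrow> int \<Rightarrow> int" where
 "fri N x = (if x = 0 then 0 else if x = 1 \<or> x = N-2 then N - 2
   else if x = 2 \<or> x = N-3 then 2*N - 6
   else if x = N-4 then 3*N - 12 else if x = N-5 then 4 * N - 20
   else min (3*N - 12) (2*N - 2 + 2*x))"

lemma fri_sub_aux:
  assumes "N \<ge> 10" "0 \<le> a" "a < N - 1" "0 \<le> b" "b < N - 1"
  shows "fri N (if a + b < N - 1 then a + b else a + b - (N-1)) \<le> fri N a + fri N b"
proof -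
  have c: "a = 0 \<or> a = 1 \<or> a = N-2 \<or> a = 2 \<or> a = N-3 \<or> a = N-4 \<or> a = N-5 \<or> (3 \<le> a \<and> a \<le> N-6)"
    using assms by linarith
  have d: "b = 0 \<or> b = 1 \<or> b = N-2 \<or> b = 2 \<or> b = N-3 \<or> b = N-4 \<or> b = N-5 \<or> (3 \<le> b \<and> b \<le> N-6)"
    using assms by linarith
  from c d show ?thesis using assms unfolding fri_def
    by (elim disjE; simp add: min_def split: if_split; arith)
qed

lemma fri_le_g:
  assumes "N \<ge> 10" "0 \<le> x" "x \<le> N - 2"
  shows "fri N x \<le> x * (N - 1 - x)"
proof -
  have c: "x = 0 \<or> x = 1 \<or> x = N-2 \<or> x = 2 \<or> x = N-3 \<or> x = N-4 \<or> x = N-5 \<or> (3 \<le> x \<and> x \<le> N-6)"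
    using assms by linarith
  then show ?thesis
  proof (elim disjE)
    assume h: "3 \<le> x \<and> x \<le> N - 6"
    have "0 \<le> (x - 3) * (N - 4 - x)" using h by simp
    hence "3 * N - 12 \<le> x * (N - 1 - x)" by (simp add: algebra_simps)
    thus ?thesis unfolding fri_def by (simp add: min_def)
  qed (auto simp: fri_def algebra_simps)
qed

lemma fri_le_max: "N \<ge> 10 \<Longrightarrow> fri N x \<le> 4 * N - 20"
  unfolding fri_def by (simp add: min_def)

lemma fri_le_2m: "N \<ge> 10 \<Longrightarrow> 0 \<le> x \<Longrightarrow> x \<le> N - 2 \<Longrightarrow> fri N x \<le> 2 * (N - 1 + x)"
  unfolding fri_def by (simp add: min_def)

definition F :: "nat \<Rightarrow> nat \<Rightarrow> int" where "F n m = fri (int n) (int (m mod (n-1)))"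

lemma F_sub: assumes n: "n \<ge> 10" shows "F n (x + y) \<le> F n x + F n y"
proof -
  define a where "a = x mod (n-1)"
  define b where "b = y mod (n-1)"
  have a: "a < n - 1" "b < n - 1" using n by (auto simp: a_def b_def)
  have e: "(x+y) mod (n-1) = (a + b) mod (n-1)" by (simp add: mod_add_eq a_def b_def)
  have e2: "int ((x+y) mod (n-1)) = (if int a + int b < int n - 1 then int a + int b else int a + int b - (int n - 1))"
  proof (cases "a + b < n - 1")
    case True thus ?thesis using e n by auto
  next
    case False
    hence "(a+b) mod (n-1) = (a + b - (n-1)) mod (n-1)" by (simp add: le_mod_geq)
    also have "\<dots> = a + b - (n-1)" using a by simp
    finally show ?thesis using e False n by auto
  qed
  show ?thesis unfolding F_def e2 a_def[symmetric] b_def[symmetric]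
    using fri_sub_aux[of "int n" "int a" "int b"] a n by simp
qed

lemma F_le_g: assumes "n \<ge> 10" "m \<le> n - 1" shows "F n m \<le> int m * (int n - 1 - int m)"
proof (cases "m = n - 1")
  case True thus ?thesis using assms by (simp add: F_def fri_def)
next
  case False
  hence "m mod (n-1) = m" using assms by simp
  thus ?thesis unfolding F_def using fri_le_g[of "int n" "int m"] assms False by simp
qed

lemma F_le_max: "n \<ge> 10 \<Longrightarrow> F n m \<le> 4 * int n - 20"
  unfolding F_def using fri_le_max[of "int n"] by simp

lemma F_le_2m: assumes n: "n \<ge> 10" "n \<le> m" shows "F n m \<le> 2 * int m"
proof -
  have m: "m = (n-1) * (m div (n-1)) + m mod (n-1)" by simp
  have "1 \<le> m div (n-1)" using n by (simp add: Suc_le_eq div_greater_zero_iff)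
  hence "(n-1) * 1 \<le> (n-1) * (m div (n-1))" by (rule mult_left_mono) simp
  hence "n - 1 + m mod (n-1) \<le> m" using m by linarith
  moreover have "m mod (n-1) < n - 1" using n by simp
  ultimately have h: "int (m mod (n-1)) \<le> int n - 2" "int n - 1 + int (m mod (n-1)) \<le> int m" using n by linarith+
  have "fri (int n) (int (m mod (n-1))) \<le> 2 * (int n - 1 + int (m mod (n-1)))"
    by (rule fri_le_2m) (use h n in auto)
  thus ?thesis unfolding F_def using h by (smt (verit))
qed

lemma F_nm1: "n \<ge> 10 \<Longrightarrow> F n (n - 1) = 0" by (simp add: F_def fri_def)
lemma F_nm2: "n \<ge> 10 \<Longrightarrow> F n (n - 2) = int n - 2" by (simp add: F_def fri_def)
lemma F_0: "F n 0 = 0" by (simp add: F_def fri_def)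

lemma F_special:
  assumes "n \<ge> 10" "r \<in> {0, 1, 2, n - 5, n - 4, n - 3, n - 2}"
  shows "fri (int n) (int r) = int r * (int n - 1 - int r)"
  using assms by (auto simp: fri_def algebra_simps)




definition nbr :: "'a set set \<Rightarrow> 'a \<Rightarrow> 'a set" where "nbr E v = {x. {v,x} \<in> E}"

lemma edge_in:
  assumes "simple_graph V E" "{a,b} \<in> E" shows "a \<in> V" "b \<in> V" "a \<noteq> b"
proof -
  obtain u v where "{a,b} = {u,v}" "u \<noteq> v" "u \<in> V" "v \<in> V"
    using assms unfolding simple_graph_def by blast
  thus "a \<in> V" "b \<in> V" "a \<noteq> b" by (auto simp: doubleton_eq_iff)
qed

lemma nbr_sub: "simple_graph V E \<Longrightarrow> nbr E v \<subseteq> V"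
  unfolding nbr_def using edge_in(2) by fast

lemma nbr_fin: "simple_graph V E \<Longrightarrow> finite (nbr E v)"
  using nbr_sub simple_graph_def finite_subset by metis

lemma nbr_irr: assumes "simple_graph V E" shows "v \<notin> nbr E v"
  using edge_in(3)[OF assms, of v v] unfolding nbr_def by auto

lemma nbr_sym: "x \<in> nbr E v \<longleftrightarrow> v \<in> nbr E x"
  unfolding nbr_def by (simp add: insert_commute)

lemma nbr_in_V: "simple_graph V E \<Longrightarrow> x \<in> nbr E v \<Longrightarrow> v \<in> V"
  using nbr_sym nbr_sub by fast

lemma deg_le: assumes "simple_graph V E" "v \<in> V" shows "card (nbr E v) \<le> card V - 1"
proof -
  have "nbr E v \<subseteq> V - {v}" using nbr_sub[OF assms(1)] nbr_irr[OF assms(1)] by auto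
  hence "card (nbr E v) \<le> card (V - {v})"
    using assms(1) by (intro card_mono) (auto simp: simple_graph_def)
  thus ?thesis using assms by simp
qed

lemma union_card:
  assumes sg: "simple_graph V E" and vu: "v \<in> nbr E u"
  shows "card (nbr E u \<union> nbr E v) = card (nbr E u) + 1 + card (nbr E v - insert u (nbr E u))"
proof -
  have uv: "u \<in> nbr E v" using vu nbr_sym by fast
  have e: "nbr E u \<union> nbr E v = insert u (nbr E u) \<union> (nbr E v - insert u (nbr E u))"
    using uv by auto
  have "card (nbr E u \<union> nbr E v) = card (insert u (nbr E u)) + card (nbr E v - insert u (nbr E u))"
    unfolding e by (rule card_Un_disjoint) (use nbr_fin[OF sg] in auto)
  also have "card (insert u (nbr E u)) = card (nbr E u) + 1"
    using nbr_fin[OF sg] nbr_irr[OF sg] by simp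
  finally show ?thesis .
qed

lemma local_T:
  fixes E :: "'a set set"
  assumes sg: "simple_graph V E" and nf: "\<not> contains_subgraph V E (T3_vertices n) (T3_edges n)"
    and n: "10 \<le> n" and uw: "w \<in> nbr E u" and du: "n - 4 \<le> card (nbr E u)"
    and dw: "4 \<le> card (nbr E w)"
  shows "card (nbr E u \<union> nbr E w) \<le> n - 1"
proof (rule ccontr)
  assume "\<not> ?thesis"
  hence big: "n \<le> card (nbr E u \<union> nbr E w)" by simp
  have wu: "u \<in> nbr E w" using uw nbr_sym by fast
  have finN: "finite (nbr E x)" for x using nbr_fin[OF sg] .
  define X where "X = nbr E u - {w}"
  define Y where "Y = nbr E w - {u}"
  have fX: "finite X" and fY: "finite Y" using finN by (auto simp: X_def Y_def)
  have uX: "u \<notin> X" "u \<notin> Y" "w \<notin> X" "w \<notin> Y"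
    using nbr_irr[OF sg] by (auto simp: X_def Y_def)
  have uneqw: "u \<noteq> w" using uw nbr_irr[OF sg] by auto
  have cX: "card X = card (nbr E u) - 1" unfolding X_def using uw finN by simp
  have cY: "card Y \<ge> 3" unfolding Y_def using wu finN dw by simp
  have XY: "X \<union> Y = (nbr E u \<union> nbr E w) - {u,w}" using nbr_irr[OF sg] by (auto simp: X_def Y_def)
  have "card ((nbr E u \<union> nbr E w) - {u,w}) = card (nbr E u \<union> nbr E w) - 2"
    using uw wu uneqw finN by (subst card_Diff_subset) auto
  hence cXY: "n - 2 \<le> card (X \<union> Y)" using big XY by simp
  have cXY2: "card (X \<union> Y) = card X + card (Y - X)"
  proof -
    have "X \<union> Y = X \<union> (Y - X)" by auto
    moreover have "card (X \<union> (Y - X)) = card X + card (Y - X)"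
      by (rule card_Un_disjoint) (use fX fY in auto)
    ultimately show ?thesis by simp
  qed
  obtain B where B: "B \<subseteq> Y" "card B = 3" "n - 5 \<le> card (X - B)" "finite B"
  proof (cases "3 \<le> card (Y - X)")
    case True
    then obtain B where "B \<subseteq> Y - X" "card B = 3" "finite B" by (metis obtain_subset_with_card_n)
    moreover have "X - B = X" using \<open>B \<subseteq> Y - X\<close> by auto
    moreover have "n - 5 \<le> card X" using cX du n by linarith
    ultimately show ?thesis using that[of B] by auto
  next
    case False
    have "card Y = card (Y \<inter> X) + card (Y - X)" using fY by (metis card_Int_Diff)
    hence "3 - card (Y - X) \<le> card (Y \<inter> X)" using cY by linarith
    then obtain B' where B': "B' \<subseteq> Y \<inter> X" "card B' = 3 - card (Y - X)" "finite B'"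
      by (metis obtain_subset_with_card_n)
    define B where "B = (Y - X) \<union> B'"
    have "card B = card (Y - X) + card B'" unfolding B_def
      using B' fY by (intro card_Un_disjoint) auto
    hence cB: "card B = 3" using B' False by simp
    have "X - B = X - B'" unfolding B_def by auto
    hence "card (X - B) = card X - card B'" using B' fX by (simp add: card_Diff_subset)
    hence "n - 5 \<le> card (X - B)" using B' cXY cXY2 False by linarith
    thus ?thesis using that[of B] cB B' fY by (auto simp: B_def)
  qed
  obtain A where A: "A \<subseteq> X - B" "card A = n - 5" "finite A"
    using B(3) by (metis obtain_subset_with_card_n)
  have "card {2..n-4} = card A" using A n by simp
  then obtain hA where hA: "bij_betw hA {2..n-4} A" using finite_same_card_bij A by blast
  have "card {n-3..n-1} = card B" using B n by simp
  then obtain hB where hB: "bij_betw hB {n-3..n-1} B" using finite_same_card_bij B by blast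
  define f where "f i = (if i = 0 then u else if i = 1 then w else if i \<le> n - 4 then hA i else hB i)" for i
  have fA: "f i \<in> A" if "2 \<le> i" "i \<le> n - 4" for i
    using that hA unfolding f_def bij_betw_def by auto
  have fB: "f i \<in> B" if "n - 3 \<le> i" "i \<le> n - 1" for i
  proof -
    have "f i = hB i" using that n unfolding f_def by auto
    thus ?thesis using that hB unfolding bij_betw_def by auto
  qed
  have AX: "A \<subseteq> nbr E u" "B \<subseteq> nbr E w" using A B by (auto simp: X_def Y_def)
  have AB: "A \<inter> B = {}" "u \<notin> A" "u \<notin> B" "w \<notin> A" "w \<notin> B" using A B uX by auto
  have cat: "i = 0 \<or> i = 1 \<or> (2 \<le> i \<and> i \<le> n - 4) \<or> (n - 3 \<le> i \<and> i \<le> n - 1)" if "i < n" for i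
    using that n by linarith
  have fAe: "f i = hA i" if "i \<in> {2..n-4}" for i using that by (auto simp: f_def)
  have fBe: "f i = hB i" if "i \<in> {n-3..n-1}" for i using that n by (auto simp: f_def)
  have "f ` {2..n-4} = hA ` {2..n-4}" by (rule image_cong[OF refl]) (rule fAe)
  hence imA: "f ` {2..n-4} = A" using hA by (simp add: bij_betw_def)
  have "f ` {n-3..n-1} = hB ` {n-3..n-1}" by (rule image_cong[OF refl]) (rule fBe)
  hence imB: "f ` {n-3..n-1} = B" using hB by (simp add: bij_betw_def)
  have "inj_on f {2..n-4} = inj_on hA {2..n-4}" by (rule inj_on_cong) (rule fAe)
  hence injA: "inj_on f {2..n-4}" using hA by (simp add: bij_betw_def)
  have "inj_on f {n-3..n-1} = inj_on hB {n-3..n-1}" by (rule inj_on_cong) (rule fBe)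
  hence injB: "inj_on f {n-3..n-1}" using hB by (simp add: bij_betw_def)
  have im01: "f ` {0,1} = {u,w}" by (auto simp: f_def)
  have inj01: "inj_on f {0,1}" using uneqw by (simp add: f_def)
  have split: "{0..<n} = ({0,1} \<union> {2..n-4}) \<union> {n-3..n-1}"
    by (rule set_eqI) (use n in \<open>simp only: Un_iff atLeastLessThan_iff atLeastAtMost_iff insert_iff empty_iff; presburger\<close>)
  have d1: "{0,1} - {2..n-4} = {0::nat,1}" "{2..n-4} - {0,1} = {2..n-4}" by auto
  have d2: "({0,1} \<union> {2..n-4}) - {n-3..n-1} = {0::nat,1} \<union> {2..n-4}"
     "{n-3..n-1} - ({0,1} \<union> {2..n-4}) = {n-3..n-1}" using n by auto
  have inj: "inj_on f {0..<n}"
    unfolding split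
  proof (subst inj_on_Un, intro conjI)
    show "inj_on f ({0,1} \<union> {2..n-4})"
      unfolding inj_on_Un d1 im01 imA using inj01 injA AB by blast
    show "inj_on f {n-3..n-1}" by (rule injB)
    have e1: "f ` ({0,1} \<union> {2..n-4}) = {u,w} \<union> A" unfolding image_Un im01 imA ..
    have "f ` ({0,1} \<union> {2..n-4} - {n-3..n-1}) \<subseteq> f ` ({0,1} \<union> {2..n-4})"
      by (rule image_mono) (rule Diff_subset)
    hence a1: "f ` ({0,1} \<union> {2..n-4} - {n-3..n-1}) \<subseteq> {u,w} \<union> A" unfolding e1 .
    have "f ` ({n-3..n-1} - ({0,1} \<union> {2..n-4})) \<subseteq> f ` {n-3..n-1}"
      by (rule image_mono) (rule Diff_subset)
    hence a2: "f ` ({n-3..n-1} - ({0,1} \<union> {2..n-4})) \<subseteq> B" unfolding imB .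
    have dj: "({u,w} \<union> A) \<inter> B = {}" using AB by blast
    show "f ` ({0, 1} \<union> {2..n - 4} - {n - 3..n - 1}) \<inter> f ` ({n - 3..n - 1} - ({0, 1} \<union> {2..n - 4})) = {}"
      using a1 a2 dj by blast
  qed
  have uV: "u \<in> V" "w \<in> V" using nbr_in_V[OF sg] uw wu by auto
  have imgeq: "f ` {0..<n} = ({u,w} \<union> A) \<union> B" unfolding split image_Un im01 imA imB ..
  have AV: "A \<subseteq> V" "B \<subseteq> V" using AX nbr_sub[OF sg] by blast+
  have img: "f ` {0..<n} \<subseteq> V" unfolding imgeq using uV AV by blast
  have edges: "\<forall>e\<in>T3_edges n. f ` e \<in> E"
  proof
    fix e assume "e \<in> T3_edges n"
    then consider (a) i where "e = {0, i}" "1 \<le> i" "i \<le> n - 4"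
      | (b) j where "e = {1, j}" "n - 3 \<le> j" "j \<le> n - 1"
      unfolding T3_edges_def by blast
    then show "f ` e \<in> E"
    proof cases
      case (a i)
      show ?thesis
      proof (cases "i = 1")
        case True thus ?thesis using a uw by (simp add: f_def nbr_def insert_commute)
      next
        case False
        hence "f i \<in> nbr E u" using fA a AX by auto
        hence "{f 0, f i} \<in> E" unfolding nbr_def by (simp add: f_def)
        thus ?thesis using a by simp
      qed
    next
      case (b j)
      hence "f j \<in> nbr E w" using fB AX by auto
      hence "{f 1, f j} \<in> E" unfolding nbr_def by (simp add: f_def)
      thus ?thesis using b by simp
    qed
  qed
  have "contains_subgraph V E (T3_vertices n) (T3_edges n)"
    unfolding contains_subgraph_def T3_vertices_def using inj img edges by blast
  with nf show False by simp
qed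




lemma sub_free:
  assumes "\<not> contains_subgraph V E VL EL" "W \<subseteq> V" "E' \<subseteq> E"
  shows "\<not> contains_subgraph W E' VL EL"
proof
  assume "contains_subgraph W E' VL EL"
  then obtain f where f: "inj_on f VL" "f ` VL \<subseteq> W" "\<forall>e\<in>EL. f ` e \<in> E'"
    unfolding contains_subgraph_def by blast
  have "f ` VL \<subseteq> V" using f(2) assms(2) by (rule subset_trans)
  moreover have "\<forall>e\<in>EL. f ` e \<in> E" using f(3) assms(3) by blast
  ultimately have "contains_subgraph V E VL EL" unfolding contains_subgraph_def using f(1) by blast
  thus False using assms(1) by simp
qed

lemma sub_sg:
  assumes "simple_graph V E"
  shows "simple_graph (V - D) {e\<in>E. e \<subseteq> V - D}"
  unfolding simple_graph_def
proof (intro conjI ballI)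
  show "finite (V - D)" using assms by (simp add: simple_graph_def)
  fix e assume e: "e \<in> {e \<in> E. e \<subseteq> V - D}"
  then obtain u v where "e = {u,v}" "u \<noteq> v" using assms unfolding simple_graph_def by blast
  thus "\<exists>u v. e = {u, v} \<and> u \<noteq> v \<and> u \<in> V - D \<and> v \<in> V - D" using e by blast
qed

lemma peel:
  fixes E :: "'a set set"
  assumes sg: "simple_graph V E" and DV: "D \<subseteq> V" and n: "10 \<le> n"
    and IH: "F n (card (V - D)) \<le> (\<Sum>v\<in>V - D. int n - 2 - int (card (nbr {e\<in>E. e \<subseteq> V - D} v)))"
    and hD: "F n (card D) \<le> (\<Sum>v\<in>D. int n - 2 - int (card (nbr E v)) - int (card (nbr E v - D)))"
  shows "F n (card V) \<le> (\<Sum>v\<in>V. int n - 2 - int (card (nbr E v)))"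
proof -
  have fV: "finite V" using sg simple_graph_def by auto
  have fD: "finite D" using fV DV finite_subset by auto
  let ?E' = "{e\<in>E. e \<subseteq> V - D}"
  have nb': "nbr ?E' v = nbr E v - D" if "v \<in> V - D" for v
  proof -
    have "x \<in> nbr ?E' v \<longleftrightarrow> x \<in> nbr E v - D" for x
      using that nbr_sub[OF sg, of v] unfolding nbr_def by auto
    thus ?thesis by blast
  qed
  have dsplit: "int (card (nbr E v)) = int (card (nbr ?E' v)) + int (card (nbr E v \<inter> D))"
    if "v \<in> V - D" for v
  proof -
    have "card (nbr E v) = card (nbr E v \<inter> D) + card (nbr E v - D)"
      using card_Int_Diff[of "nbr E v" D] nbr_fin[OF sg] by simp
    thus ?thesis using nb'[OF that] by simp
  qed
  have dc: "(\<Sum>v\<in>V - D. card (nbr E v \<inter> D)) = (\<Sum>v\<in>D. card (nbr E v - D))"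
  proof -
    have a: "card (nbr E v \<inter> D) = (\<Sum>x\<in>D. if {v,x} \<in> E then 1 else 0)" for v
    proof -
      have "nbr E v \<inter> D = {x\<in>D. {v,x} \<in> E}" unfolding nbr_def by auto
      hence "card (nbr E v \<inter> D) = (\<Sum>x\<in>{x\<in>D. {v,x} \<in> E}. 1)" by simp
      also have "\<dots> = (\<Sum>x\<in>D. if {v,x} \<in> E then 1 else 0)" using fD by (rule sum.inter_filter)
      finally show ?thesis .
    qed
    have b: "card (nbr E x - D) = (\<Sum>v\<in>V - D. if {v,x} \<in> E then 1 else 0)" if "x \<in> D" for x
    proof -
      have "nbr E x - D = {v\<in>V - D. {v,x} \<in> E}"
        using nbr_sub[OF sg, of x] unfolding nbr_def by (auto simp: insert_commute)
      hence "card (nbr E x - D) = (\<Sum>v\<in>{v\<in>V - D. {v,x} \<in> E}. 1)" by simp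
      also have "\<dots> = (\<Sum>v\<in>V - D. if {v,x} \<in> E then 1 else 0)" using fV by (intro sum.inter_filter) auto
      finally show ?thesis .
    qed
    have "(\<Sum>v\<in>V - D. card (nbr E v \<inter> D)) = (\<Sum>v\<in>V - D. \<Sum>x\<in>D. if {v,x} \<in> E then 1 else 0)"
      using a by simp
    also have "\<dots> = (\<Sum>x\<in>D. \<Sum>v\<in>V - D. if {v,x} \<in> E then (1::nat) else 0)" by (rule sum.swap)
    also have "\<dots> = (\<Sum>x\<in>D. card (nbr E x - D))" by (intro sum.cong refl) (simp add: b)
    finally show ?thesis .
  qed
  define T where "T v = int n - 2 - int (card (nbr E v))" for v
  define T' where "T' v = int n - 2 - int (card (nbr ?E' v))" for v
  define Ov where "Ov v = int (card (nbr E v - D))" for v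
  define Iv where "Iv v = int (card (nbr E v \<inter> D))" for v
  have s1: "(\<Sum>v\<in>V. T v) = (\<Sum>v\<in>V - D. T v) + (\<Sum>v\<in>D. T v)" by (rule sum.subset_diff[OF DV fV])
  have "(\<Sum>v\<in>V - D. T v) = (\<Sum>v\<in>V - D. T' v - Iv v)"
    by (intro sum.cong refl) (simp add: T_def T'_def Iv_def dsplit)
  hence s2: "(\<Sum>v\<in>V - D. T v) = (\<Sum>v\<in>V - D. T' v) - (\<Sum>v\<in>V - D. Iv v)" by (simp add: sum_subtractf)
  have s3: "(\<Sum>v\<in>D. T v) = (\<Sum>v\<in>D. T v - Ov v) + (\<Sum>v\<in>D. Ov v)" by (simp add: sum_subtractf)
  have s4: "(\<Sum>v\<in>V - D. Iv v) = (\<Sum>v\<in>D. Ov v)"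
    unfolding Iv_def Ov_def using arg_cong[OF dc, of int] by (simp add: of_nat_sum)
  have cV: "card V = card D + card (V - D)"
    using card_Diff_subset[OF fD DV] card_mono[OF fV DV] by simp
  have Fs: "F n (card V) \<le> F n (card D) + F n (card (V - D))" using F_sub[OF n] cV by metis
  have IH': "F n (card (V - D)) \<le> (\<Sum>v\<in>V - D. T' v)" using IH by (simp add: T'_def)
  have hD': "F n (card D) \<le> (\<Sum>v\<in>D. T v - Ov v)" using hD by (simp add: T_def Ov_def)
  have "F n (card V) \<le> (\<Sum>v\<in>V. T v)" using s1 s2 s3 s4 Fs IH' hD' by linarith
  thus ?thesis by (simp add: T_def)
qed


lemma sum_lb:
  fixes g :: "'a \<Rightarrow> int"
  assumes "\<And>v. v \<in> D \<Longrightarrow> b \<le> g v"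
  shows "int (card D) * b \<le> (\<Sum>v\<in>D. g v)"
proof -
  have "(\<Sum>v\<in>D. b) \<le> (\<Sum>v\<in>D. g v)" using assms by (rule sum_mono)
  thus ?thesis by simp
qed

lemma out_le_deg:
  assumes "simple_graph V E" shows "card (nbr E v - D) \<le> card (nbr E v)"
  using nbr_fin[OF assms] by (intro card_mono) auto

lemma out_T:
  fixes E :: "'a set set"
  assumes sg: "simple_graph V E" and nf: "\<not> contains_subgraph V E (T3_vertices n) (T3_edges n)"
    and n: "10 \<le> n" and vu: "v \<in> nbr E u" and du: "n - 4 \<le> card (nbr E u)"
    and dv: "4 \<le> card (nbr E v)" and D: "insert u (nbr E u) \<subseteq> D"
  shows "card (nbr E v - D) + card (nbr E u) \<le> n - 2"
proof -
  have "card (nbr E u \<union> nbr E v) \<le> n - 1" by (rule local_T[OF sg nf n vu du dv])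
  hence a: "card (nbr E u) + 1 + card (nbr E v - insert u (nbr E u)) \<le> n - 1"
    using union_card[OF sg vu] by simp
  have "card (nbr E v - D) \<le> card (nbr E v - insert u (nbr E u))"
    using nbr_fin[OF sg] D by (intro card_mono) auto
  thus ?thesis using a by linarith
qed




definition tm :: "nat \<Rightarrow> 'a set set \<Rightarrow> 'a set \<Rightarrow> 'a \<Rightarrow> int" where
  "tm n E D v = int n - 2 - int (card (nbr E v)) - int (card (nbr E v - D))"

lemma tm_ge:
  assumes "card (nbr E v) + card (nbr E v - D) + k + 2 \<le> n"
  shows "int k \<le> tm n E D v"
proof -
  have "int (card (nbr E v) + card (nbr E v - D) + k + 2) \<le> int n" using assms by (simp only: of_nat_le_iff)
  thus ?thesis unfolding tm_def by simp
qed

lemma find_D: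
  fixes E :: "'a set set"
  assumes sg: "simple_graph V E" and nf: "\<not> contains_subgraph V E (T3_vertices n) (T3_edges n)"
    and n: "10 \<le> n" and ne: "V \<noteq> {}"
  shows "\<exists>D. D \<subseteq> V \<and> D \<noteq> {} \<and> F n (card D) \<le> (\<Sum>v\<in>D. tm n E D v)"
proof -
  have fV: "finite V" using sg simple_graph_def by auto
  have Nsub: "\<And>v. nbr E v \<subseteq> V" using nbr_sub[OF sg] .
  have Nfin: "\<And>v. finite (nbr E v)" using nbr_fin[OF sg] .
  have Nirr: "\<And>v. v \<notin> nbr E v" using nbr_irr[OF sg] .
  have odeg: "\<And>v D. card (nbr E v - D) \<le> card (nbr E v)" using out_le_deg[OF sg] .
  have Nsym: "\<And>u v. v \<in> nbr E u \<Longrightarrow> u \<in> nbr E v" using nbr_sym by fast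
  have cins: "card (insert u (nbr E u)) = card (nbr E u) + 1" for u using Nfin Nirr by simp
  show ?thesis
  proof (cases "card V \<le> n - 1")
    case True
    have "int n - 1 - int (card V) \<le> tm n E V v" if v: "v \<in> V" for v
    proof -
      have "card (nbr E v) \<le> card V - 1" by (rule deg_le[OF sg v])
      moreover have "nbr E v - V = {}" using Nsub[of v] by blast
      hence c0: "card (nbr E v - V) = 0" by (metis card.empty)
      moreover have "card V \<ge> 1" using v fV by (metis One_nat_def Suc_leI card_gt_0_iff empty_iff)
      ultimately have "card (nbr E v) + card (nbr E v - V) + (n - 1 - card V) + 2 \<le> n" using True n by linarith
      hence "int (n - 1 - card V) \<le> tm n E V v" by (rule tm_ge)
      moreover have "int (n - 1 - card V) = int n - 1 - int (card V)" using True n by (simp add: of_nat_diff)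
      ultimately show ?thesis by simp
    qed
    hence "int (card V) * (int n - 1 - int (card V)) \<le> (\<Sum>v\<in>V. tm n E V v)" by (rule sum_lb)
    moreover have "F n (card V) \<le> int (card V) * (int n - 1 - int (card V))" by (rule F_le_g[OF n True])
    ultimately show ?thesis using ne by (intro exI[of _ V]) auto
  next
    case big: False
    show ?thesis
    proof (cases "\<exists>u\<in>V. n - 1 \<le> card (nbr E u)")
      case True
      then obtain u where u: "u \<in> V" "n - 1 \<le> card (nbr E u)" by blast
      define D where "D = insert u (nbr E u)"
      have small: "card (nbr E v) \<le> 3" if vin: "v \<in> nbr E u" for v
      proof (rule ccontr)
        assume "\<not> ?thesis"
        hence "card (nbr E u \<union> nbr E v) \<le> n - 1" using local_T[OF sg nf n vin] u by simp
        moreover have "card (nbr E u \<union> nbr E v) = card (nbr E u) + 1 + card (nbr E v - insert u (nbr E u))"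
          by (rule union_card[OF sg vin])
        ultimately show False using u n by linarith
      qed
      have tv: "int n - 7 \<le> tm n E D v" if vin: "v \<in> nbr E u" for v
      proof -
        have uv: "u \<in> nbr E v" using vin Nsym by blast
        hence "nbr E v - D \<subseteq> nbr E v - {u}" by (auto simp: D_def)
        hence "card (nbr E v - D) \<le> card (nbr E v - {u})" using Nfin by (intro card_mono) auto
        also have "\<dots> = card (nbr E v) - 1" using uv Nfin by simp
        finally have a: "card (nbr E v - D) \<le> card (nbr E v) - 1" .
        have "card (nbr E v) \<ge> 1" using uv Nfin by (metis One_nat_def Suc_leI card_gt_0_iff empty_iff)
        hence "card (nbr E v) + card (nbr E v - D) + (n - 7) + 2 \<le> n" using a small[OF vin] n by linarith
        hence "int (n - 7) \<le> tm n E D v" by (rule tm_ge)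
        thus ?thesis using n by (simp add: of_nat_diff)
      qed
      have s1: "int (card (nbr E u)) * (int n - 7) \<le> (\<Sum>v\<in>nbr E u. tm n E D v)" by (rule sum_lb) (rule tv)
      have "nbr E u - D = {}" by (auto simp: D_def)
      hence "card (nbr E u - D) = 0" by (metis card.empty)
      hence tu: "tm n E D u = int n - 2 - int (card (nbr E u))" unfolding tm_def by simp
      have sD: "(\<Sum>v\<in>D. tm n E D v) = tm n E D u + (\<Sum>v\<in>nbr E u. tm n E D v)"
        unfolding D_def using Nfin Nirr by (simp add: sum.insert)
      define x where "x = int (card (nbr E u))"
      define N where "N = int n"
      have xN: "N - 1 \<le> x" "10 \<le> N" using u n by (auto simp: x_def N_def)
      have "(N - 1) * (N - 8) \<le> x * (N - 8)" by (rule mult_right_mono) (use xN in auto)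
      moreover have "0 \<le> (N - 10) * (N - 2)" using xN by simp
      ultimately have "4 * N - 20 \<le> N - 2 - x + x * (N - 7)" by (simp add: algebra_simps)
      hence "4 * int n - 20 \<le> (\<Sum>v\<in>D. tm n E D v)" using s1 tu sD by (simp add: x_def N_def)
      moreover have "F n (card D) \<le> 4 * int n - 20" by (rule F_le_max[OF n])
      moreover have "D \<subseteq> V" "D \<noteq> {}" using u Nsub by (auto simp: D_def)
      ultimately show ?thesis by (intro exI[of _ D]) auto
    next
      case c1: False
      hence dle: "\<forall>v\<in>V. card (nbr E v) \<le> n - 2" by force
      show ?thesis
      proof (cases "\<exists>u\<in>V. card (nbr E u) = n - 2")
        case True
        then obtain u where u: "u \<in> V" "card (nbr E u) = n - 2" by blast
        define D where "D = insert u (nbr E u)"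
        have cD: "card D = n - 1" using cins u n by (simp add: D_def)
        have "0 \<le> tm n E D v" if vD: "v \<in> D" for v
        proof (cases "v = u")
          case True
          have "nbr E u - D = {}" by (auto simp: D_def)
          hence "card (nbr E u - D) = 0" by (metis card.empty)
          hence "card (nbr E v) + card (nbr E v - D) + 0 + 2 \<le> n" using u True n by (simp; linarith)
          hence "int 0 \<le> tm n E D v" by (rule tm_ge)
          thus ?thesis by simp
        next
          case False
          hence vin: "v \<in> nbr E u" using vD by (simp add: D_def)
          have vV: "v \<in> V" using vin Nsub by blast
          show ?thesis
          proof (cases "4 \<le> card (nbr E v)")
            case True
            have "card (nbr E v - D) + card (nbr E u) \<le> n - 2"
              by (rule out_T[OF sg nf n vin _ True]) (use u n in \<open>auto simp: D_def\<close>)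
            moreover have "card (nbr E v) \<le> n - 2" using dle vV by blast
            ultimately have "card (nbr E v) + card (nbr E v - D) + 0 + 2 \<le> n" using u n by linarith
            hence "int 0 \<le> tm n E D v" by (rule tm_ge)
            thus ?thesis by simp
          next
            case False
            hence "card (nbr E v) + card (nbr E v - D) + 0 + 2 \<le> n" using odeg[of v D] n by linarith
            hence "int 0 \<le> tm n E D v" by (rule tm_ge)
            thus ?thesis by simp
          qed
        qed
        hence "int (card D) * 0 \<le> (\<Sum>v\<in>D. tm n E D v)" by (rule sum_lb)
        moreover have "F n (card D) = 0" using cD F_nm1[OF n] by simp
        moreover have "D \<subseteq> V" "D \<noteq> {}" using u Nsub by (auto simp: D_def)
        ultimately show ?thesis by (intro exI[of _ D]) auto
      next
        case c2: False
        hence dle3: "\<forall>v\<in>V. card (nbr E v) \<le> n - 3" using dle n by force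
        show ?thesis
        proof (cases "\<exists>u\<in>V. card (nbr E u) = n - 3")
          case c3: True
          show ?thesis
          proof (cases "\<exists>u w. u \<in> V \<and> w \<in> nbr E u \<and> card (nbr E u) = n - 3 \<and> card (nbr E w) = n - 3
                  \<and> card (nbr E u \<union> nbr E w) = n - 1")
            case True
            then obtain u w where uw: "u \<in> V" "w \<in> nbr E u" "card (nbr E u) = n - 3"
              "card (nbr E w) = n - 3" "card (nbr E u \<union> nbr E w) = n - 1" by blast
            define D where "D = nbr E u \<union> nbr E w"
            have key: "0 \<le> tm n E D v" if c: "card (nbr E c) = n - 3" "insert c (nbr E c) \<subseteq> D"
              and vin: "v \<in> nbr E c" for c v
            proof -
              have vV: "v \<in> V" using vin Nsub by blast
              show ?thesis
              proof (cases "4 \<le> card (nbr E v)")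
                case True
                have "card (nbr E v - D) + card (nbr E c) \<le> n - 2"
                  by (rule out_T[OF sg nf n vin _ True c(2)]) (use c n in auto)
                moreover have "card (nbr E v) \<le> n - 3" using dle3 vV by blast
                ultimately have "card (nbr E v) + card (nbr E v - D) + 0 + 2 \<le> n" using c n by linarith
                hence "int 0 \<le> tm n E D v" by (rule tm_ge)
                thus ?thesis by simp
              next
                case False
                hence "card (nbr E v) + card (nbr E v - D) + 0 + 2 \<le> n" using odeg[of v D] n by linarith
                hence "int 0 \<le> tm n E D v" by (rule tm_ge)
                thus ?thesis by simp
              qed
            qed
            have i1: "insert u (nbr E u) \<subseteq> D" using uw Nsym by (auto simp: D_def)
            have i2: "insert w (nbr E w) \<subseteq> D" using uw by (auto simp: D_def)
            have "0 \<le> tm n E D v" if vD: "v \<in> D" for v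
            proof -
              from vD have "v \<in> nbr E u \<or> v \<in> nbr E w" by (simp add: D_def)
              thus ?thesis using key[OF uw(3) i1] key[OF uw(4) i2] by blast
            qed
            hence "int (card D) * 0 \<le> (\<Sum>v\<in>D. tm n E D v)" by (rule sum_lb)
            moreover have "F n (card D) = 0" using uw(5) F_nm1[OF n] by (simp add: D_def)
            moreover have "D \<subseteq> V" "D \<noteq> {}" using uw Nsub by (auto simp: D_def)
            ultimately show ?thesis by (intro exI[of _ D]) auto
          next
            case notE: False
            from c3 obtain u where u: "u \<in> V" "card (nbr E u) = n - 3" by blast
            define D where "D = insert u (nbr E u)"
            have cD: "card D = n - 2" using cins u n by (simp add: D_def)
            have "1 \<le> tm n E D v" if vD: "v \<in> D" for v
            proof (cases "v = u")
              case True
              have "nbr E u - D = {}" by (auto simp: D_def)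
              hence "card (nbr E u - D) = 0" by (metis card.empty)
              hence "card (nbr E v) + card (nbr E v - D) + 1 + 2 \<le> n" using u True n by (simp; linarith)
              hence "int 1 \<le> tm n E D v" by (rule tm_ge)
              thus ?thesis by simp
            next
              case False
              hence vin: "v \<in> nbr E u" using vD by (simp add: D_def)
              have vV: "v \<in> V" using vin Nsub by blast
              have dv: "card (nbr E v) \<le> n - 3" using dle3 vV by blast
              consider "card (nbr E v) = n - 3" | "4 \<le> card (nbr E v)" "card (nbr E v) \<noteq> n - 3"
                | "card (nbr E v) \<le> 3" by linarith
              thus ?thesis
              proof cases
                case 1
                have "card (nbr E u \<union> nbr E v) \<le> n - 1"
                  by (rule local_T[OF sg nf n vin]) (use u 1 n in auto)
                moreover have "card (nbr E u \<union> nbr E v) \<noteq> n - 1" using notE u vin 1 by blast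
                ultimately have "card (nbr E u \<union> nbr E v) \<le> n - 2" by linarith
                hence "card (nbr E v - insert u (nbr E u)) = 0" using union_card[OF sg vin] u n by linarith
                hence "card (nbr E v - D) = 0" by (simp add: D_def)
                hence "card (nbr E v) + card (nbr E v - D) + 1 + 2 \<le> n" using 1 n by simp
                hence "int 1 \<le> tm n E D v" by (rule tm_ge)
                thus ?thesis by simp
              next
                case 2
                have "card (nbr E v - D) + card (nbr E u) \<le> n - 2"
                  by (rule out_T[OF sg nf n vin _ 2(1)]) (use u n in \<open>auto simp: D_def\<close>)
                hence "card (nbr E v) + card (nbr E v - D) + 1 + 2 \<le> n" using 2 u dv n by linarith
                hence "int 1 \<le> tm n E D v" by (rule tm_ge)
                thus ?thesis by simp
              next
                case 3
                hence "card (nbr E v) + card (nbr E v - D) + 1 + 2 \<le> n" using odeg[of v D] n by linarith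
                hence "int 1 \<le> tm n E D v" by (rule tm_ge)
                thus ?thesis by simp
              qed
            qed
            hence "int (card D) * 1 \<le> (\<Sum>v\<in>D. tm n E D v)" by (rule sum_lb)
            moreover have "F n (card D) = int n - 2" using cD F_nm2[OF n] by simp
            moreover have "D \<subseteq> V" "D \<noteq> {}" using u Nsub by (auto simp: D_def)
            ultimately show ?thesis using cD n by (intro exI[of _ D]) auto
          qed
        next
          case False
          hence dle4: "\<forall>v\<in>V. card (nbr E v) \<le> n - 4" using dle3 n by force
          have "2 \<le> tm n E V v" if v: "v \<in> V" for v
          proof -
            have "nbr E v - V = {}" using Nsub[of v] by blast
            hence c0: "card (nbr E v - V) = 0" by (metis card.empty)
            have "card (nbr E v) \<le> n - 4" using dle4 v by blast
            hence "card (nbr E v) + card (nbr E v - V) + 2 + 2 \<le> n" using c0 n by linarith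
            hence "int 2 \<le> tm n E V v" by (rule tm_ge)
            thus ?thesis by simp
          qed
          hence "int (card V) * 2 \<le> (\<Sum>v\<in>V. tm n E V v)" by (rule sum_lb)
          moreover have "F n (card V) \<le> 2 * int (card V)" by (rule F_le_2m[OF n]) (use big in auto)
          ultimately show ?thesis using ne by (intro exI[of _ V]) auto
        qed
      qed
    qed
  qed
qed

lemma main:
  fixes E :: "'a set set"
  assumes n: "10 \<le> n"
  shows "simple_graph V E \<Longrightarrow> \<not> contains_subgraph V E (T3_vertices n) (T3_edges n) \<Longrightarrow>
    F n (card V) \<le> (\<Sum>v\<in>V. int n - 2 - int (card (nbr E v)))"
proof (induction "card V" arbitrary: V E rule: less_induct)
  case less
  show ?case
  proof (cases "V = {}")
    case True thus ?thesis by (simp add: F_0)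
  next
    case False
    obtain D where D: "D \<subseteq> V" "D \<noteq> {}" "F n (card D) \<le> (\<Sum>v\<in>D. tm n E D v)"
      using find_D[OF less.prems n False] by blast
    have fV: "finite V" using less.prems(1) simple_graph_def by auto
    have fD: "finite D" using fV D(1) finite_subset by auto
    have "card D > 0" using D fD by auto
    hence lt: "card (V - D) < card V" using card_Diff_subset[OF fD D(1)] card_mono[OF fV D(1)] by linarith
    have sg': "simple_graph (V - D) {e\<in>E. e \<subseteq> V - D}" by (rule sub_sg[OF less.prems(1)])
    have nf': "\<not> contains_subgraph (V - D) {e\<in>E. e \<subseteq> V - D} (T3_vertices n) (T3_edges n)"
      by (rule sub_free[OF less.prems(2)]) auto
    have IH: "F n (card (V - D)) \<le> (\<Sum>v\<in>V - D. int n - 2 - int (card (nbr {e\<in>E. e \<subseteq> V - D} v)))"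
      using less.hyps[OF lt sg' nf'] .
    show ?thesis by (rule peel[OF less.prems(1) D(1) n IH]) (use D(3) in \<open>simp add: tm_def\<close>)
  qed
qed




lemma handshake:
  fixes E :: "'a set set"
  assumes sg: "simple_graph V E"
  shows "(\<Sum>v\<in>V. card (nbr E v)) = 2 * card E"
proof -
  have fV: "finite V" using sg simple_graph_def by auto
  have EP: "E \<subseteq> Pow V"
  proof
    fix e assume "e \<in> E"
    then obtain u v where "e = {u,v}" "u \<in> V" "v \<in> V" using sg unfolding simple_graph_def by blast
    thus "e \<in> Pow V" by simp
  qed
  have fE: "finite E" using finite_subset[OF EP] fV by simp
  have e2: "card e = 2" "e \<subseteq> V" if "e \<in> E" for e
    using that sg unfolding simple_graph_def by auto
  have cv: "card (nbr E v) = (\<Sum>e\<in>E. if v \<in> e then 1 else 0)" for v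
  proof -
    have "bij_betw (\<lambda>x. {v,x}) (nbr E v) {e\<in>E. v \<in> e}"
    proof (rule bij_betw_imageI)
      show "inj_on (\<lambda>x. {v,x}) (nbr E v)" by (auto simp: inj_on_def doubleton_eq_iff)
      show "(\<lambda>x. {v,x}) ` nbr E v = {e\<in>E. v \<in> e}"
      proof
        show "(\<lambda>x. {v,x}) ` nbr E v \<subseteq> {e\<in>E. v \<in> e}" by (auto simp: nbr_def)
        show "{e\<in>E. v \<in> e} \<subseteq> (\<lambda>x. {v,x}) ` nbr E v"
        proof
          fix e assume e: "e \<in> {e\<in>E. v \<in> e}"
          then obtain a b where ab: "e = {a,b}" using sg unfolding simple_graph_def by blast
          show "e \<in> (\<lambda>x. {v,x}) ` nbr E v"
          proof (cases "v = a")
            case True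
            thus ?thesis using e ab by (auto simp: nbr_def)
          next
            case False
            hence "v = b" "e = {v,a}" using e ab by auto
            thus ?thesis using e by (auto simp: nbr_def)
          qed
        qed
      qed
    qed
    hence "card (nbr E v) = card {e\<in>E. v \<in> e}" by (rule bij_betw_same_card)
    also have "\<dots> = (\<Sum>e\<in>{e\<in>E. v \<in> e}. 1)" by simp
    also have "\<dots> = (\<Sum>e\<in>E. if v \<in> e then 1 else 0)" using fE by (rule sum.inter_filter)
    finally show ?thesis .
  qed
  have "(\<Sum>v\<in>V. card (nbr E v)) = (\<Sum>v\<in>V. \<Sum>e\<in>E. if v \<in> e then 1 else 0)" using cv by simp
  also have "\<dots> = (\<Sum>e\<in>E. \<Sum>v\<in>V. if v \<in> e then (1::nat) else 0)" by (rule sum.swap)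
  also have "\<dots> = (\<Sum>e\<in>E. 2)"
  proof (intro sum.cong refl)
    fix e assume e: "e \<in> E"
    have "(\<Sum>v\<in>V. if v \<in> e then (1::nat) else 0) = (\<Sum>v\<in>{v\<in>V. v \<in> e}. 1)"
      using fV by (rule sum.inter_filter[symmetric])
    also have "{v\<in>V. v \<in> e} = e" using e2[OF e] by auto
    finally show "(\<Sum>v\<in>V. if v \<in> e then (1::nat) else 0) = 2" using e2[OF e] by simp
  qed
  finally show ?thesis by simp
qed

definition Eb :: "nat \<Rightarrow> nat \<Rightarrow> nat set set" where
  "Eb p m = {{a,b} | a b. a < p \<and> b < p \<and> a \<noteq> b \<and> a div m = b div m}"

lemma Eb_sg: "simple_graph {0..<p} (Eb p m)"
  unfolding simple_graph_def Eb_def by auto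

lemma Eb_edge: "{a,b} \<in> Eb p m \<Longrightarrow> a div m = b div m"
  unfolding Eb_def by (auto simp: doubleton_eq_iff)

lemma Eb_nbr: "v < p \<Longrightarrow> nbr (Eb p m) v = {x. x < p \<and> x \<noteq> v \<and> x div m = v div m}"
  unfolding nbr_def Eb_def by (auto simp: doubleton_eq_iff)

lemma div_iff: "0 < m \<Longrightarrow> (x::nat) div m = q \<longleftrightarrow> q * m \<le> x \<and> x < q * m + m"
proof
  assume m: "0 < m" and "x div m = q"
  moreover have "x = m * (x div m) + x mod m" by simp
  moreover have "x mod m < m" using m by simp
  ultimately show "q * m \<le> x \<and> x < q * m + m" by (metis add_less_cancel_left le_add1 mult.commute)
next
  assume m: "0 < m" and h: "q * m \<le> x \<and> x < q * m + m"
  show "x div m = q" by (rule div_nat_eqI) (use h in \<open>auto simp: algebra_simps\<close>)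
qed

lemma Eb_free:
  assumes n: "10 \<le> n"
  shows "\<not> contains_subgraph {0..<p} (Eb p (n - 1)) (T3_vertices n) (T3_edges n)"
proof
  let ?m = "n - 1"
  assume "contains_subgraph {0..<p} (Eb p ?m) (T3_vertices n) (T3_edges n)"
  then obtain f where f: "inj_on f {0..<n}" "\<forall>e\<in>T3_edges n. f ` e \<in> Eb p ?m"
    unfolding contains_subgraph_def T3_vertices_def by blast
  define q where "q = f 0 div ?m"
  have a: "f i div ?m = q" if "1 \<le> i" "i \<le> n - 4" for i
  proof -
    have "{0, i} \<in> T3_edges n" using that unfolding T3_edges_def by blast
    hence "{f 0, f i} \<in> Eb p ?m" using f(2) by force
    thus ?thesis unfolding q_def using Eb_edge by metis
  qed
  have b: "f j div ?m = q" if "n - 3 \<le> j" "j \<le> n - 1" for j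
  proof -
    have "{1, j} \<in> T3_edges n" using that unfolding T3_edges_def by blast
    hence "{f 1, f j} \<in> Eb p ?m" using f(2) by force
    hence "f j div ?m = f 1 div ?m" using Eb_edge by metis
    thus ?thesis using a[of 1] n by simp
  qed
  have all: "f i div ?m = q" if "i < n" for i
  proof -
    have "i = 0 \<or> (1 \<le> i \<and> i \<le> n - 4) \<or> (n - 3 \<le> i \<and> i \<le> n - 1)" using that n by linarith
    thus ?thesis using a b q_def by blast
  qed
  have "f ` {0..<n} \<subseteq> {q * ?m ..< q * ?m + ?m}"
    using all n div_iff[of ?m] by auto
  hence "card (f ` {0..<n}) \<le> card {q * ?m ..< q * ?m + ?m}" by (intro card_mono) auto
  moreover have "card (f ` {0..<n}) = n" using card_image[OF f(1)] by simp
  ultimately show False using n by simp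
qed

lemma Eb_degsum:
  assumes n: "10 \<le> n" and p: "p = k * (n - 1) + r" and r: "r < n - 1"
  shows "(\<Sum>v\<in>{0..<p}. int (card (nbr (Eb p (n-1)) v))) = int (k * (n - 1)) * (int n - 2) + int r * (int r - 1)"
proof -
  let ?m = "n - 1"
  have m: "0 < ?m" using n by simp
  have d1: "int (card (nbr (Eb p ?m) v)) = int n - 2" if v: "v \<in> {0..<k * ?m}" for v
  proof -
    define q where "q = v div ?m"
    have qk: "q < k" using v m unfolding q_def by (simp add: div_less_iff_less_mult mult.commute)
    have "q * ?m + ?m \<le> k * ?m" using qk by (metis add.commute mult_Suc Suc_leI mult_le_mono1)
    hence le: "q * ?m + ?m \<le> p" using p by simp
    have vp: "v < p" using v p by auto
    have "nbr (Eb p ?m) v = {q * ?m..<q * ?m + ?m} - {v}"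
      using Eb_nbr[OF vp, of ?m] div_iff[OF m] le unfolding q_def by auto
    moreover have "v \<in> {q * ?m..<q * ?m + ?m}" using div_iff[OF m, of v q] unfolding q_def by simp
    ultimately have "card (nbr (Eb p ?m) v) = ?m - 1" by simp
    thus ?thesis using n by simp
  qed
  have d2: "int (card (nbr (Eb p ?m) v)) = int r - 1" if v: "v \<in> {k * ?m..<p}" for v
  proof -
    have vp: "v < p" using v by simp
    have "k * ?m \<le> v" "v < k * ?m + ?m" using v p r by auto
    hence vk: "v div ?m = k" using div_iff[OF m, of v k] by simp
    have iff: "x < p \<and> x div ?m = k \<longleftrightarrow> x \<in> {k * ?m..<p}" for x
    proof -
      have "x < p \<Longrightarrow> x < k * ?m + ?m" using p r by linarith
      thus ?thesis using div_iff[OF m, of x k] p by auto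
    qed
    have "nbr (Eb p ?m) v = {x. x < p \<and> x \<noteq> v \<and> x div ?m = k}" using Eb_nbr[OF vp, of ?m] vk by simp
    also have "\<dots> = {k * ?m..<p} - {v}" using iff by blast
    finally have "nbr (Eb p ?m) v = {k * ?m..<p} - {v}" .
    hence "card (nbr (Eb p ?m) v) = r - 1" using v p by simp
    moreover have "1 \<le> r" using v p by auto
    ultimately show ?thesis by simp
  qed
  have "(\<Sum>v\<in>{0..<p}. int (card (nbr (Eb p ?m) v)))
      = (\<Sum>v\<in>{0..<k * ?m}. int (card (nbr (Eb p ?m) v))) + (\<Sum>v\<in>{k * ?m..<p}. int (card (nbr (Eb p ?m) v)))"
    using p by (simp add: sum.atLeastLessThan_concat)
  also have "\<dots> = (\<Sum>v\<in>{0..<k * ?m}. int n - 2) + (\<Sum>v\<in>{k * ?m..<p}. int r - 1)"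
    using d1 d2 by simp
  also have "\<dots> = int (k * ?m) * (int n - 2) + int r * (int r - 1)" using p by simp
  finally show ?thesis .
qed


theorem theorem4p1:
  fixes p n k r :: nat
  assumes "n \<ge> 10" and "p \<ge> n"
    and "k \<ge> 1" and "p = k * (n - 1) + r"
    and "r \<in> {0, 1, 2, n - 5, n - 4, n - 3, n - 2}"
  shows "2 * int (ex p (T3_vertices n) (T3_edges n))
           = (int n - 2) * int p - int r * (int n - 1 - int r)"
proof -
  have n10: "10 \<le> n" using assms(1) .
  have rlt: "r < n - 1" using assms(1,5) by auto
  have pmod: "p mod (n - 1) = r" using assms(4) rlt by simp
  have Fp: "F n p = int r * (int n - 1 - int r)"
    unfolding F_def pmod using F_special[OF n10 assms(5)] by simp
  define S where "S = {card E |E. simple_graph {0..<p} E \<and> \<not> contains_subgraph {0..<p} E (T3_vertices n) (T3_edges n)}"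
  define val where "val = card (Eb p (n-1))"
  have up: "2 * int (card E) \<le> (int n - 2) * int p - int r * (int n - 1 - int r)"
    if sg: "simple_graph {0..<p} E" and nf: "\<not> contains_subgraph {0..<p} E (T3_vertices n) (T3_edges n)"
    for E :: "nat set set"
  proof -
    have "F n (card {0..<p}) \<le> (\<Sum>v\<in>{0..<p}. int n - 2 - int (card (nbr E v)))" by (rule main[OF n10 sg nf])
    also have "\<dots> = int p * (int n - 2) - int (\<Sum>v\<in>{0..<p}. card (nbr E v))"
      by (simp add: sum_subtractf of_nat_sum)
    also have "(\<Sum>v\<in>{0..<p}. card (nbr E v)) = 2 * card E" by (rule handshake[OF sg])
    finally show ?thesis using Fp by (simp add: algebra_simps)
  qed
  have valeq: "2 * int val = (int n - 2) * int p - int r * (int n - 1 - int r)"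
  proof -
    have h1: "(\<Sum>v\<in>{0..<p}. int (card (nbr (Eb p (n-1)) v))) = int (k * (n-1)) * (int n - 2) + int r * (int r - 1)"
      by (rule Eb_degsum[OF n10 assms(4) rlt])
    have h2: "int (\<Sum>v\<in>{0..<p}. card (nbr (Eb p (n-1)) v)) = (\<Sum>v\<in>{0..<p}. int (card (nbr (Eb p (n-1)) v)))"
      by (rule of_nat_sum)
    have h3: "(\<Sum>v\<in>{0..<p}. card (nbr (Eb p (n-1)) v)) = 2 * val"
      unfolding val_def by (rule handshake[OF Eb_sg])
    have "2 * int val = int (2 * val)" by simp
    also have "\<dots> = int (\<Sum>v\<in>{0..<p}. card (nbr (Eb p (n-1)) v))" unfolding h3 ..
    also have "\<dots> = (\<Sum>v\<in>{0..<p}. int (card (nbr (Eb p (n-1)) v)))" by (rule h2)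
    also have "\<dots> = int (k * (n-1)) * (int n - 2) + int r * (int r - 1)" by (rule h1)
    finally have a: "2 * int val = int (k * (n-1)) * (int n - 2) + int r * (int r - 1)" .
    have b: "int (k * (n-1)) = int k * (int n - 1)" using n10 by (simp add: of_nat_diff)
    have c: "int p = int k * (int n - 1) + int r" using assms(4) b by simp
    show ?thesis unfolding a b c by (simp add: algebra_simps)
  qed
  have inS: "val \<in> S" using Eb_sg Eb_free[OF n10] unfolding S_def val_def by blast
  have bound: "y \<le> val" if "y \<in> S" for y
  proof -
    obtain E where E: "y = card E" "simple_graph {0..<p} E"
      "\<not> contains_subgraph {0..<p} E (T3_vertices n) (T3_edges n)" using \<open>y \<in> S\<close> unfolding S_def by blast
    have "2 * int y \<le> 2 * int val" using up[OF E(2,3)] valeq E(1) by simp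
    thus ?thesis by simp
  qed
  have fin: "finite S" using bound by (metis finite_atMost finite_subset atMost_iff subsetI)
  have "ex p (T3_vertices n) (T3_edges n) = val"
    unfolding ex_def S_def[symmetric] by (rule Max_eqI[OF fin]) (use bound inS in auto)
  thus ?thesis using valeq by simp
qed

end
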